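(* Let $U$ be a linear subspace of $L_2(\mathcal{X},\mathcal{Y},\mu)$ that is closed under $\mathcal{Q}$, i.e. $\mathcal{Q}U\subset U$. Define $S=\{f\in U: f \text{ is } \mathcal{G}\text{-equivariant}\}$ and $A=\{f\in U:\mathcal{Q}f=0\}$. Then $U$ admits the orthogonal decomposition $U=S\oplus A$, orthogonality being with respect to $\langle\cdot,\cdot\rangle_\mu$.
   Context: $\mathcal{G}$ is a compact, second countable, Hausdorff topological group with its Borel $\sigma$-algebra and Haar probability measure $\lambda$ ($\lambda(\mathcal{G})=1$). $\mathcal{X}$ is a nonempty Polish space with its Borel $\sigma$-algebra, on which $\mathcal{G}$ acts measurably, $(g,x)\mapsto gx$. $\mathcal{Y}=\mathbb{R}^k$ with an inner product $\langle\cdot,\cdot\rangle$ and induced norm $\|\cdot\|$, on which $\mathcal{G}$ acts by a measurable linear representation $\psi$ that is unitary: $\langle\psi(g)a,\psi(g)b\rangle=\langle a,b\rangle$ for all $a,b,g$; write $gy=\psi(g)y$. $\mu$ is a $\mathcal{G}$-invariant Borel probability measure on $\mathcal{X}$ (if $X\sim\mu$ then $gX\sim\mu$ for all $g$). $L_2(\mathcal{X},\mathcal{Y},\mu)$ is the Hilbert space of $\mu$-a.e. equivalence classes of measurable $f:\mathcal{X}\to\mathcal{Y}$ with $\|f\|_\mu^2=\int\|f(x)\|^2d\mu(x)<\infty$, inner product $\langle f,h\rangle_\mu=\int_\mathcal{X}\langle f(x),h(x)\rangle d\mu(x)$. A function $f$ is $\mathcal{G}$-equivariant if $f(gx)=\psi(g)f(x)$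 for all $g\in\mathcal{G},x\in\mathcal{X}$. The averaging operator is $\mathcal{Q}f(x)=\int_\mathcal{G}\psi(g^{-1})f(gx)\,d\lambda(g)$. *)

theory Defs
  imports "HOL-Probability.Probability"
begin

text \<open>A compact topological group structure on the whole type 'g, given by a
multiplication m, inverse i and unit e. (Second countability and the Hausdorff
property are imposed via type classes in the theorem.)\<close>
definition compact_group :: "('g::topological_space \<Rightarrow> 'g \<Rightarrow> 'g) \<Rightarrow> ('g \<Rightarrow> 'g) \<Rightarrow> 'g \<Rightarrow> bool" where
  "compact_group m i e \<longleftrightarrow>
     (\<forall>a b c. m (m a b) c = m a (m b c)) \<and>
     (\<forall>a. m e a = a \<and> m a e = a) \<and>
     (\<forall>a. m (i a) a = e \<and> m a (i a) = e) \<and>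
     continuous_on UNIV (\<lambda>p. m (fst p) (snd p)) \<and>
     continuous_on UNIV i \<and>
     compact (UNIV :: 'g set)"

definition haar_prob :: "('g::topological_space \<Rightarrow> 'g \<Rightarrow> 'g) \<Rightarrow> 'g measure \<Rightarrow> bool" where
  "haar_prob m lam \<longleftrightarrow>
     prob_space lam \<and> sets lam = sets borel \<and>
     (\<forall>g. \<forall>A\<in>sets borel. emeasure lam (m g ` A) = emeasure lam A)"

definition measurable_action :: "('g::topological_space \<Rightarrow> 'g \<Rightarrow> 'g) \<Rightarrow> 'g \<Rightarrow> ('g \<Rightarrow> 'x::topological_space \<Rightarrow> 'x) \<Rightarrow> bool" where
  "measurable_action m e act \<longleftrightarrow>
     (\<forall>x. act e x = x) \<and> (\<forall>g h x. act (m g h) x = act g (act h x)) \<and>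
     (\<lambda>p. act (fst p) (snd p)) \<in> borel_measurable (borel \<Otimes>\<^sub>M borel)"

definition unitary_rep :: "('g::topological_space \<Rightarrow> 'g \<Rightarrow> 'g) \<Rightarrow> 'g \<Rightarrow> ('g \<Rightarrow> 'y::euclidean_space \<Rightarrow> 'y) \<Rightarrow> bool" where
  "unitary_rep m e psi \<longleftrightarrow>
     (\<forall>g. linear (psi g)) \<and> psi e = id \<and> (\<forall>g h. psi (m g h) = psi g \<circ> psi h) \<and>
     (\<forall>g a b. inner (psi g a) (psi g b) = inner a b) \<and>
     (\<forall>y. (\<lambda>g. psi g y) \<in> borel_measurable borel)"

definition invariant_prob :: "('g \<Rightarrow> 'x::topological_space \<Rightarrow> 'x) \<Rightarrow> 'x measure \<Rightarrow> bool" where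
  "invariant_prob act mu \<longleftrightarrow>
     prob_space mu \<and> sets mu = sets borel \<and> (\<forall>g. distr mu borel (act g) = mu)"

text \<open>Representatives of elements of L_2(X,Y,mu).\<close>
definition L2_fun :: "'x measure \<Rightarrow> ('x \<Rightarrow> 'y::euclidean_space) \<Rightarrow> bool" where
  "L2_fun mu f \<longleftrightarrow> f \<in> borel_measurable mu \<and> integrable mu (\<lambda>x. (norm (f x))\<^sup>2)"

definition inner_mu :: "'x measure \<Rightarrow> ('x \<Rightarrow> 'y::euclidean_space) \<Rightarrow> ('x \<Rightarrow> 'y) \<Rightarrow> real" where
  "inner_mu mu f h = (\<integral>x. inner (f x) (h x) \<partial>mu)"

definition equivariant :: "('g \<Rightarrow> 'x \<Rightarrow> 'x) \<Rightarrow> ('g \<Rightarrow> 'y \<Rightarrow> 'y) \<Rightarrow> ('x \<Rightarrow> 'y) \<Rightarrow> bool" where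
  "equivariant act psi f \<longleftrightarrow> (\<forall>g x. f (act g x) = psi g (f x))"

definition Qop :: "('g \<Rightarrow> 'g) \<Rightarrow> 'g measure \<Rightarrow> ('g \<Rightarrow> 'y::euclidean_space \<Rightarrow> 'y) \<Rightarrow> ('g \<Rightarrow> 'x \<Rightarrow> 'x)
                   \<Rightarrow> ('x \<Rightarrow> 'y) \<Rightarrow> 'x \<Rightarrow> 'y" where
  "Qop i lam psi act f x = (\<integral>g. psi (i g) (f (act g x)) \<partial>lam)"

end

theory Submission
  imports Defs
begin

locale setting =
  fixes m :: "'g::{second_countable_topology, t2_space} \<Rightarrow> 'g \<Rightarrow> 'g"
    and i :: "'g \<Rightarrow> 'g" and e :: 'g and lam :: "'g measure"
    and act :: "'g \<Rightarrow> 'x::polish_space \<Rightarrow> 'x" and mu :: "'x measure"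
    and psi :: "'g \<Rightarrow> 'y::euclidean_space \<Rightarrow> 'y"
  assumes grp: "compact_group m i e"
    and haar: "haar_prob m lam"
    and actm: "measurable_action m e act"
    and rep: "unitary_rep m e psi"
    and inv: "invariant_prob act mu"
begin

lemma assoc: "m (m a b) c = m a (m b c)" using grp unfolding compact_group_def by blast
lemma unit_l[simp]: "m e a = a" and unit_r[simp]: "m a e = a" using grp unfolding compact_group_def by blast+
lemma inv_l[simp]: "m (i a) a = e" and inv_r[simp]: "m a (i a) = e" using grp unfolding compact_group_def by blast+
lemma cancel_l[simp]: "m (i a) (m a b) = b" by (metis assoc inv_l unit_l)
lemma cancel_l'[simp]: "m a (m (i a) b) = b" by (metis assoc inv_r unit_l)
lemma inv_inv[simp]: "i (i a) = a" by (metis cancel_l inv_l unit_r)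
lemma inv_mult: "i (m a b) = m (i b) (i a)"
  by (metis assoc cancel_l inv_r unit_r)

lemma lam_prob: "prob_space lam" and sets_lam: "sets lam = sets borel"
  using haar unfolding haar_prob_def by auto
lemma lam_inv: "A \<in> sets borel \<Longrightarrow> emeasure lam (m g ` A) = emeasure lam A"
  using haar unfolding haar_prob_def by auto

lemma mu_prob: "prob_space mu" and sets_mu: "sets mu = sets borel"
  and mu_inv: "distr mu borel (act g) = mu"
  using inv unfolding invariant_prob_def by auto

lemma act_e[simp]: "act e x = x" and act_m: "act (m g h) x = act g (act h x)"
  using actm unfolding measurable_action_def by auto
lemma act_meas: "(\<lambda>p. act (fst p) (snd p)) \<in> borel_measurable (borel \<Otimes>\<^sub>M borel)"
  using actm unfolding measurable_action_def by auto

lemma psi_lin: "linear (psi g)" and psi_e: "psi e = id" and psi_m: "psi (m g h) = psi g \<circ> psi h"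
  and psi_inner: "inner (psi g a) (psi g b) = inner a b"
  and psi_meas0: "(\<lambda>g. psi g y) \<in> borel_measurable borel"
  using rep unfolding unitary_rep_def by auto

lemma psi_inv_cancel[simp]: "psi (i g) (psi g y) = y"
  by (metis comp_apply id_apply inv_l psi_e psi_m)

lemma psi_cancel2[simp]: "psi g (psi (i g) y) = y"
  using psi_inv_cancel[of "i g"] by simp

lemma psi_norm[simp]: "norm (psi g y) = norm y"
  using psi_inner[of g y y] by (simp add: norm_eq_sqrt_inner)

lemma psi_adj: "inner (psi g a) b = inner a (psi (i g) b)"
  using psi_inner[of "i g" "psi g a" b] by simp

lemma m_cont: "continuous_on UNIV (\<lambda>p. m (fst p) (snd p))" and i_cont: "continuous_on UNIV i"
  using grp unfolding compact_group_def by auto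

lemma i_meas[measurable]: "i \<in> borel_measurable borel"
  using i_cont by (simp add: borel_measurable_continuous_onI)

lemma m_meas: "(\<lambda>p. m (fst p) (snd p)) \<in> borel_measurable (borel \<Otimes>\<^sub>M borel)"
  using m_cont by (simp add: borel_prod borel_measurable_continuous_onI)

lemma m_meas2[measurable]:
  assumes "k \<in> borel_measurable M" "l \<in> borel_measurable M"
  shows "(\<lambda>z. m (k z) (l z)) \<in> borel_measurable M"
proof -
  have "(\<lambda>z. (k z, l z)) \<in> measurable M (borel \<Otimes>\<^sub>M borel)" using assms by measurable
  from measurable_compose[OF this m_meas] show ?thesis by simp
qed

lemma act_meas2[measurable]:
  assumes "k \<in> borel_measurable M" "l \<in> borel_measurable M"
  shows "(\<lambda>z. act (k z) (l z)) \<in> borel_measurable M"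
proof -
  have "(\<lambda>z. (k z, l z)) \<in> measurable M (borel \<Otimes>\<^sub>M borel)" using assms by measurable
  from measurable_compose[OF this act_meas] show ?thesis by simp
qed

lemma psi_expand: "psi g y = (\<Sum>b\<in>Basis. (y \<bullet> b) *\<^sub>R psi g b)"
proof -
  have "psi g y = psi g (\<Sum>b\<in>Basis. (y \<bullet> b) *\<^sub>R b)" by (simp add: euclidean_representation)
  also have "\<dots> = (\<Sum>b\<in>Basis. (y \<bullet> b) *\<^sub>R psi g b)"
    using psi_lin[of g] by (simp add: linear_sum linear_scale)
  finally show ?thesis .
qed

lemma psi_meas2[measurable]:
  assumes "k \<in> borel_measurable M" "l \<in> borel_measurable M"
  shows "(\<lambda>z. psi (k z) (l z)) \<in> borel_measurable M"
proof -
  have "\<And>b. (\<lambda>z. psi (k z) b) \<in> borel_measurable M"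
    using measurable_compose[OF assms(1) psi_meas0] by simp
  then have "(\<lambda>z. (\<Sum>b\<in>Basis. (l z \<bullet> b) *\<^sub>R psi (k z) b)) \<in> borel_measurable M"
    using assms by measurable
  then show ?thesis by (subst psi_expand) simp
qed

lemma space_lam[simp]: "space lam = UNIV"
  using sets_eq_imp_space_eq[OF sets_lam] by simp
lemma space_mu[simp]: "space mu = UNIV"
  using sets_eq_imp_space_eq[OF sets_mu] by simp

lemma meas_lam_eq: "measurable lam N = measurable borel N"
  by (rule measurable_cong_sets[OF sets_lam refl])
lemma meas_mu_eq: "measurable mu N = measurable borel N"
  by (rule measurable_cong_sets[OF sets_mu refl])
lemma meas_lam_iff: "f \<in> measurable lam N \<longleftrightarrow> f \<in> measurable borel N"
  by (simp only: meas_lam_eq)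
lemma meas_mu_iff: "f \<in> measurable mu N \<longleftrightarrow> f \<in> measurable borel N"
  by (simp only: meas_mu_eq)

lemma ma_meas: "m a \<in> measurable lam lam"
proof -
  have "(\<lambda>g. m a g) \<in> borel_measurable borel" by measurable
  then show ?thesis using measurable_cong_sets[OF sets_lam sets_lam] by simp
qed

lemma i_meas_lam: "i \<in> measurable lam lam"
  using measurable_cong_sets[OF sets_lam sets_lam] i_meas by simp

lemma left_distr: "distr lam lam (m a) = lam"
proof (rule measure_eqI)
  show "sets (distr lam lam (m a)) = sets lam" by simp
  fix A assume "A \<in> sets (distr lam lam (m a))"
  then have A: "A \<in> sets borel" using sets_lam by simp
  have "m a -` A = m (i a) ` A"
    by (auto simp: image_iff) (metis cancel_l)
  then show "emeasure (distr lam lam (m a)) A = emeasure lam A"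
    using A ma_meas lam_inv[OF A, of "i a"] sets_lam
    by (simp add: emeasure_distr)
qed

lemma nn_left:
  assumes "f \<in> borel_measurable borel"
  shows "(\<integral>\<^sup>+g. f (m a g) \<partial>lam) = integral\<^sup>N lam f"
proof -
  have "f \<in> borel_measurable (distr lam lam (m a))" using assms unfolding left_distr meas_lam_eq .
  from nn_integral_distr[OF ma_meas this] show ?thesis by (simp add: left_distr)
qed

lemma int_left:
  fixes f :: "'g \<Rightarrow> 'b::{banach, second_countable_topology}"
  assumes "f \<in> borel_measurable borel"
  shows "(\<integral>g. f (m a g) \<partial>lam) = integral\<^sup>L lam f"
proof -
  have "f \<in> borel_measurable lam" using assms unfolding meas_lam_eq .
  from integral_distr[OF ma_meas this] show ?thesis by (simp add: left_distr)
qed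

lemma inv_emeasure:
  assumes A: "A \<in> sets borel"
  shows "emeasure lam (i -` A) = emeasure lam A"
proof -
  interpret L: prob_space lam by (rule lam_prob)
  interpret LL: pair_prob_space lam lam by unfold_locales
  note A[measurable]
  have meas: "(\<lambda>(g,h). indicator A (m (i h) g) :: ennreal) \<in> borel_measurable (lam \<Otimes>\<^sub>M lam)"
  proof -
    have "(\<lambda>p. indicator A (m (i (snd p)) (fst p)) :: ennreal) \<in> borel_measurable (borel \<Otimes>\<^sub>M borel)"
      by measurable
    moreover have "measurable (lam \<Otimes>\<^sub>M lam) N = measurable (borel \<Otimes>\<^sub>M borel) N" for N :: "ennreal measure"
      by (rule measurable_cong_sets[OF sets_pair_measure_cong[OF sets_lam sets_lam] refl])
    ultimately show ?thesis by (simp add: case_prod_beta')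
  qed
  have iA: "i -` A \<in> sets borel" using measurable_sets[OF i_meas A] by simp
  have 1: "(\<integral>\<^sup>+g. indicator A (m (i h) g) \<partial>lam) = emeasure lam A" for h
    using nn_left[of "indicator A" "i h"] A sets_lam by simp
  have 2: "(\<integral>\<^sup>+h. indicator A (m (i h) g) \<partial>lam) = emeasure lam (i -` A)" for g
  proof -
    have "(\<lambda>h. indicator A (m (i h) g) :: ennreal) \<in> borel_measurable borel" by measurable
    from nn_left[OF this, of g, symmetric]
    have "(\<integral>\<^sup>+h. indicator A (m (i h) g) \<partial>lam) = (\<integral>\<^sup>+h. indicator A (m (i (m g h)) g) \<partial>lam)" .
    also have "\<dots> = (\<integral>\<^sup>+h. indicator (i -` A) h \<partial>lam)"
      by (simp add: inv_mult assoc indicator_def)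
    also have "\<dots> = emeasure lam (i -` A)" using iA sets_lam by simp
    finally show ?thesis .
  qed
  from LL.Fubini'[OF meas] show ?thesis
    using L.emeasure_space_1 by (simp add: 1 2)
qed

lemma inv_distr: "distr lam lam i = lam"
proof (rule measure_eqI)
  show "sets (distr lam lam i) = sets lam" by simp
  fix A assume "A \<in> sets (distr lam lam i)"
  then have A: "A \<in> sets borel" using sets_lam by simp
  then show "emeasure (distr lam lam i) A = emeasure lam A"
    using i_meas_lam inv_emeasure[OF A] sets_lam by (simp add: emeasure_distr vimage_def)
qed

lemma int_inv:
  fixes f :: "'g \<Rightarrow> 'b::{banach, second_countable_topology}"
  assumes "f \<in> borel_measurable borel"
  shows "(\<integral>g. f (i g) \<partial>lam) = integral\<^sup>L lam f"
proof -
  have "f \<in> borel_measurable lam" using assms unfolding meas_lam_eq .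
  from integral_distr[OF i_meas_lam this] show ?thesis by (simp add: inv_distr)
qed


lemma psi_bl: "bounded_linear (psi g)"
  using psi_lin linear_conv_bounded_linear by blast

lemma Q_alt:
  assumes f[measurable]: "f \<in> borel_measurable borel"
  shows "Qop i lam psi act f x = (\<integral>g. psi g (f (act (i g) x)) \<partial>lam)"
proof -
  have "(\<lambda>g. psi g (f (act (i g) x))) \<in> borel_measurable borel" by measurable
  from int_inv[OF this] show ?thesis by (simp add: Qop_def)
qed

lemma Q_equiv:
  assumes f[measurable]: "f \<in> borel_measurable borel"
  shows "Qop i lam psi act f (act h x) = psi h (Qop i lam psi act f x)"
proof -
  have mf: "(\<lambda>g. psi g (f (act (i g) (act h x)))) \<in> borel_measurable borel" by measurable
  have "Qop i lam psi act f (act h x) = (\<integral>g. psi g (f (act (i g) (act h x))) \<partial>lam)"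
    by (rule Q_alt[OF f])
  also have "\<dots> = (\<integral>g. psi (m h g) (f (act (i (m h g)) (act h x))) \<partial>lam)"
    by (rule int_left[OF mf, symmetric])
  also have "\<dots> = (\<integral>g. psi h (psi g (f (act (i g) x))) \<partial>lam)"
  proof -
    have "act (i (m h g)) (act h x) = act (i g) x" for g
      by (simp add: act_m[symmetric] inv_mult assoc)
    then show ?thesis by (simp add: psi_m)
  qed
  also have "\<dots> = psi h (\<integral>g. psi g (f (act (i g) x)) \<partial>lam)"
    by (rule integral_bounded_linear'[OF psi_bl psi_bl[of "i h"]]) simp
  also have "\<dots> = psi h (Qop i lam psi act f x)" using Q_alt[OF f] by simp
  finally show ?thesis .
qed

lemma Q_diff:
  assumes f[measurable]: "f \<in> borel_measurable borel"
  shows "Qop i lam psi act (\<lambda>x. f x + (-1) *\<^sub>R Qop i lam psi act f x) x = 0"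
proof -
  interpret L: prob_space lam by (rule lam_prob)
  define F where "F g = psi (i g) (f (act g x))" for g
  define c where "c = Qop i lam psi act f x"
  have c: "c = integral\<^sup>L lam F" unfolding c_def F_def Qop_def ..
  have pw: "psi (i g) (f (act g x) + (-1) *\<^sub>R Qop i lam psi act f (act g x)) = F g - c" for g
    unfolding F_def c_def Q_equiv[OF f]
    by (simp add: linear_diff[OF psi_lin])
  have "Qop i lam psi act (\<lambda>x. f x + (-1) *\<^sub>R Qop i lam psi act f x) x
       = (\<integral>g. psi (i g) (f (act g x) + (-1) *\<^sub>R Qop i lam psi act f (act g x)) \<partial>lam)"
    by (simp only: Qop_def)
  also have "\<dots> = (\<integral>g. F g - c \<partial>lam)" by (simp only: pw)
  also have "\<dots> = 0"
  proof (cases "integrable lam F")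
    case True
    then show ?thesis using L.prob_space by (simp add: c)
  next
    case False
    have "\<not> integrable lam (\<lambda>g. F g - c)"
    proof
      assume "integrable lam (\<lambda>g. F g - c)"
      then have "integrable lam (\<lambda>g. (F g - c) + c)"
        by (intro Bochner_Integration.integrable_add L.integrable_const)
      then show False using False by simp
    qed
    then show ?thesis by (rule not_integrable_integral_eq)
  qed
  finally show ?thesis .
qed

lemma QQ_equiv:
  assumes f: "f \<in> borel_measurable borel"
  shows "equivariant act psi (Qop i lam psi act f)"
  unfolding equivariant_def using Q_equiv[OF f] by blast


lemma meas_prod_eq: "measurable (mu \<Otimes>\<^sub>M lam) N = measurable (borel \<Otimes>\<^sub>M borel) N"
  by (rule measurable_cong_sets[OF sets_pair_measure_cong[OF sets_mu sets_lam] refl])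

lemma prod_int:
  fixes phi :: "'x \<Rightarrow> real"
  assumes phi[measurable]: "phi \<in> borel_measurable borel" and nn: "\<And>x. 0 \<le> phi x"
    and int: "integrable mu phi"
  shows "integrable (mu \<Otimes>\<^sub>M lam) (\<lambda>p. phi (act (snd p) (fst p)))"
proof -
  interpret L: prob_space lam by (rule lam_prob)
  interpret M: prob_space mu by (rule mu_prob)
  interpret PL: pair_prob_space mu lam by unfold_locales
  have pm: "(\<lambda>p. phi (act (snd p) (fst p))) \<in> borel_measurable (mu \<Otimes>\<^sub>M lam)"
    unfolding meas_prod_eq by measurable
  then have pm': "(\<lambda>p. ennreal (phi (act (snd p) (fst p)))) \<in> borel_measurable (mu \<Otimes>\<^sub>M lam)"
    by measurable
  have inner: "(\<integral>\<^sup>+x. ennreal (phi (act g x)) \<partial>mu) = ennreal (integral\<^sup>L mu phi)" for g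
  proof -
    have am: "act g \<in> measurable mu borel" unfolding meas_mu_eq by measurable
    have "(\<lambda>x. ennreal (phi x)) \<in> borel_measurable (distr mu borel (act g))" by simp
    from nn_integral_distr[OF am this]
    have "(\<integral>\<^sup>+x. ennreal (phi (act g x)) \<partial>mu) = (\<integral>\<^sup>+x. ennreal (phi x) \<partial>mu)"
      by (simp add: mu_inv)
    also have "\<dots> = ennreal (integral\<^sup>L mu phi)"
      by (rule nn_integral_eq_integral[OF int]) (simp add: nn)
    finally show ?thesis .
  qed
  have "integral\<^sup>N (mu \<Otimes>\<^sub>M lam) (\<lambda>p. ennreal (phi (act (snd p) (fst p))))
      = (\<integral>\<^sup>+g. (\<integral>\<^sup>+x. ennreal (phi (act g x)) \<partial>mu) \<partial>lam)"
    using PL.nn_integral_snd[OF pm'] by simp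
  also have "\<dots> = ennreal (integral\<^sup>L mu phi)"
    using L.emeasure_space_1 by (simp add: inner)
  finally have "integral\<^sup>N (mu \<Otimes>\<^sub>M lam) (\<lambda>p. ennreal (phi (act (snd p) (fst p)))) < \<infinity>"
    by simp
  then show ?thesis
    by (intro integrableI_nonneg pm) (simp_all add: nn)
qed

lemma ab_le: "(u::real) * v \<le> u\<^sup>2 + v\<^sup>2" if "0 \<le> u" "0 \<le> v"
proof -
  have u2: "0 \<le> u * u" and v2: "0 \<le> v * v" by simp_all
  show ?thesis
  proof (cases "u \<le> v")
    case True
    have "u * v \<le> v * v" using mult_right_mono[OF True \<open>0 \<le> v\<close>] .
    then show ?thesis unfolding power2_eq_square using u2 by linarith
  next
    case False
    then have "v \<le> u" by simp
    have "u * v \<le> u * u" using mult_left_mono[OF \<open>v \<le> u\<close> \<open>0 \<le> u\<close>] .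
    then show ?thesis unfolding power2_eq_square using v2 by linarith
  qed
qed

lemma orth:
  assumes s: "L2_fun mu s" and a: "L2_fun mu a" and eq: "equivariant act psi s"
    and Qa: "AE x in mu. Qop i lam psi act a x = 0"
  shows "inner_mu mu s a = 0"
proof -
  interpret L: prob_space lam by (rule lam_prob)
  interpret M: prob_space mu by (rule mu_prob)
  interpret PL: pair_prob_space mu lam by unfold_locales
  have sm[measurable]: "s \<in> borel_measurable borel" using s unfolding L2_fun_def meas_mu_eq by simp
  have am[measurable]: "a \<in> borel_measurable borel" using a unfolding L2_fun_def meas_mu_eq by simp
  have si: "integrable mu (\<lambda>x. (norm (s x))\<^sup>2)" using s unfolding L2_fun_def by simp
  have ai: "integrable mu (\<lambda>x. (norm (a x))\<^sup>2)" using a unfolding L2_fun_def by simp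
  have seq: "s (act g x) = psi g (s x)" for g x using eq unfolding equivariant_def by simp
  define H where "H x g = inner (s x) (psi (i g) (a (act g x)))" for x g
  define F where "F p = psi (i (snd p)) (a (act (snd p) (fst p)))" for p
  have step1: "inner_mu mu s a = (\<integral>x. H x g \<partial>mu)" for g
  proof -
    have actm: "act g \<in> measurable mu borel" unfolding meas_mu_eq by measurable
    have "(\<lambda>x. inner (s x) (a x)) \<in> borel_measurable borel" by measurable
    from integral_distr[OF actm this]
    have "(\<integral>x. inner (s x) (a x) \<partial>mu) = (\<integral>x. inner (s (act g x)) (a (act g x)) \<partial>mu)"
      by (simp add: mu_inv)
    also have "\<dots> = (\<integral>x. H x g \<partial>mu)"
      unfolding H_def seq psi_adj ..
    finally show ?thesis unfolding inner_mu_def .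
  qed
  have step2: "inner_mu mu s a = (\<integral>g. (\<integral>x. H x g \<partial>mu) \<partial>lam)"
    using L.prob_space by (simp add: step1[symmetric])
  have Hm: "(\<lambda>p. H (fst p) (snd p)) \<in> borel_measurable (mu \<Otimes>\<^sub>M lam)"
    unfolding meas_prod_eq H_def by measurable
  have Fm: "F \<in> borel_measurable (mu \<Otimes>\<^sub>M lam)"
    unfolding meas_prod_eq F_def by measurable
  have Hi: "integrable (mu \<Otimes>\<^sub>M lam) (case_prod H)"
  proof -
    have "integrable (mu \<Otimes>\<^sub>M lam) (\<lambda>p. (\<lambda>x. (norm (s x))\<^sup>2 + (norm (a x))\<^sup>2) (act (snd p) (fst p)))"
      by (rule prod_int) (use si ai in auto)
    then show ?thesis
    proof (rule Bochner_Integration.integrable_bound)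
      show "case_prod H \<in> borel_measurable (mu \<Otimes>\<^sub>M lam)" using Hm by (simp add: case_prod_beta')
      show "AE p in mu \<Otimes>\<^sub>M lam. norm (case_prod H p) \<le> norm ((\<lambda>x. (norm (s x))\<^sup>2 + (norm (a x))\<^sup>2) (act (snd p) (fst p)))"
      proof (rule AE_I2)
        fix p :: "'x \<times> 'g"
        obtain x g where p: "p = (x, g)" by (cases p)
        have "norm (H x g) \<le> norm (s x) * norm (psi (i g) (a (act g x)))"
          unfolding H_def real_norm_def by (rule Cauchy_Schwarz_ineq2)
        also have "\<dots> = norm (s (act g x)) * norm (a (act g x))" by (simp add: seq)
        also have "\<dots> \<le> (norm (s (act g x)))\<^sup>2 + (norm (a (act g x)))\<^sup>2" by (rule ab_le) simp_all
        finally show "norm (case_prod H p) \<le> norm ((\<lambda>x. (norm (s x))\<^sup>2 + (norm (a x))\<^sup>2) (act (snd p) (fst p)))"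
          unfolding p by simp
      qed
    qed
  qed
  have Fi: "integrable (mu \<Otimes>\<^sub>M lam) F"
  proof -
    have "integrable (mu \<Otimes>\<^sub>M lam) (\<lambda>p. (\<lambda>x. 1 + (norm (a x))\<^sup>2) (act (snd p) (fst p)))"
      by (rule prod_int) (use ai in auto)
    then show ?thesis
    proof (rule Bochner_Integration.integrable_bound)
      show "F \<in> borel_measurable (mu \<Otimes>\<^sub>M lam)" by (rule Fm)
      show "AE p in mu \<Otimes>\<^sub>M lam. norm (F p) \<le> norm ((\<lambda>x. 1 + (norm (a x))\<^sup>2) (act (snd p) (fst p)))"
      proof (intro AE_I2)
        fix p
        have "norm (F p) = norm (a (act (snd p) (fst p)))" by (simp add: F_def)
        also have "\<dots> \<le> 1 + (norm (a (act (snd p) (fst p))))\<^sup>2"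
          using ab_le[of "norm (a (act (snd p) (fst p)))" 1] by simp
        finally show "norm (F p) \<le> norm ((\<lambda>x. 1 + (norm (a x))\<^sup>2) (act (snd p) (fst p)))"
          by simp
      qed
    qed
  qed
  have step3: "(\<integral>g. (\<integral>x. H x g \<partial>mu) \<partial>lam) = (\<integral>x. (\<integral>g. H x g \<partial>lam) \<partial>mu)"
    by (rule PL.Fubini_integral[OF Hi])
  have AEi: "AE x in mu. integrable lam (\<lambda>g. F (x, g))"
    by (rule PL.AE_integrable_fst'[OF Fi])
  have "AE x in mu. (\<integral>g. H x g \<partial>lam) = 0"
    using AEi Qa
  proof eventually_elim
    case (elim x)
    have "(\<integral>g. H x g \<partial>lam) = (\<integral>g. inner (s x) (F (x, g)) \<partial>lam)"
      unfolding H_def F_def by simp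
    also have "\<dots> = inner (s x) (\<integral>g. F (x, g) \<partial>lam)"
      by (rule integral_inner_right) (rule elim(1))
    also have "\<dots> = inner (s x) (Qop i lam psi act a x)" unfolding F_def Qop_def by simp
    finally show ?case using elim(2) by simp
  qed
  then have "(\<integral>x. (\<integral>g. H x g \<partial>lam) \<partial>mu) = 0" by (rule integral_eq_zero_AE)
  then show ?thesis using step2 step3 by simp
qed

end

theorem lemma3p1:
  fixes m :: "'g::{second_countable_topology, t2_space} \<Rightarrow> 'g \<Rightarrow> 'g"
    and i :: "'g \<Rightarrow> 'g" and e :: 'g and lam :: "'g measure"
    and act :: "'g \<Rightarrow> 'x::polish_space \<Rightarrow> 'x" and mu :: "'x measure"
    and psi :: "'g \<Rightarrow> 'y::euclidean_space \<Rightarrow> 'y"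
    and U :: "('x \<Rightarrow> 'y) set"
  assumes "compact_group m i e"
    and "haar_prob m lam"
    and "measurable_action m e act"
    and "unitary_rep m e psi"
    and "invariant_prob act mu"
    and U_L2: "\<forall>f\<in>U. L2_fun mu f"
    and U_zero: "(\<lambda>x. 0) \<in> U"
    and U_add: "\<forall>f\<in>U. \<forall>h\<in>U. (\<lambda>x. f x + h x) \<in> U"
    and U_scale: "\<forall>c. \<forall>f\<in>U. (\<lambda>x. c *\<^sub>R f x) \<in> U"
    and U_ae: "\<forall>f\<in>U. \<forall>h. L2_fun mu h \<and> (AE x in mu. f x = h x) \<longrightarrow> h \<in> U"
    and U_Q: "\<forall>f\<in>U. Qop i lam psi act f \<in> U"
  shows "let S = {f\<in>U. equivariant act psi f};
             A = {f\<in>U. AE x in mu. Qop i lam psi act f x = 0}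
         in (\<forall>s\<in>S. \<forall>a\<in>A. inner_mu mu s a = 0) \<and>
            (\<forall>f\<in>U. \<exists>s\<in>S. \<exists>a\<in>A. AE x in mu. f x = s x + a x)"
proof -
  interpret setting m i e lam act mu psi
    by (unfold_locales; fact)
  have fm: "f \<in> borel_measurable borel" if "f \<in> U" for f
    using U_L2 that unfolding L2_fun_def meas_mu_eq by blast
  show ?thesis unfolding Let_def
  proof (intro conjI ballI)
    fix s a
    assume s: "s \<in> {f \<in> U. equivariant act psi f}"
      and a: "a \<in> {f \<in> U. AE x in mu. Qop i lam psi act f x = 0}"
    show "inner_mu mu s a = 0"
      by (rule orth) (use s a U_L2 in auto)
  next
    fix f assume f: "f \<in> U"
    define s where "s = Qop i lam psi act f"
    define a where "a = (\<lambda>x. f x + (-1) *\<^sub>R s x)"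
    have sU: "s \<in> U" using U_Q f unfolding s_def by blast
    have "(\<lambda>x. (-1) *\<^sub>R s x) \<in> U" using U_scale sU by blast
    from U_add[rule_format, OF f this] have aU: "a \<in> U" unfolding a_def by simp
    have "equivariant act psi s" unfolding s_def by (rule QQ_equiv[OF fm[OF f]])
    then have sS: "s \<in> {f \<in> U. equivariant act psi f}" using sU by blast
    have "\<And>x. Qop i lam psi act a x = 0" unfolding a_def s_def by (rule Q_diff[OF fm[OF f]])
    then have aA: "a \<in> {f \<in> U. AE x in mu. Qop i lam psi act f x = 0}" using aU by simp
    have "AE x in mu. f x = s x + a x" unfolding a_def by simp
    with sS aA show "\<exists>s\<in>{f \<in> U. equivariant act psi f}. \<exists>a\<in>{f \<in> U. AE x in mu. Qop i lam psi act f x = 0}.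
       AE x in mu. f x = s x + a x" by blast
  qed
qed

end
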